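(* Let $D$ be a positive integer and let $G$ be a graph with $\Delta(G)\le D$. If $G$ is nice with respect to some maximum clique $S$ of $G^2$, then $\omega(G^2)\le \frac52 D$.
   Context: The square $G^2$ of $G$ is obtained from $G$ by adding an edge between every pair of vertices at distance 2 in $G$. A $k$-degeneracy order of a graph is an ordering of its vertices such that each vertex has at most $k$ neighbors later in the order. A graph $G$ is nice with respect to a vertex set $S$ if (a) $S$ is a clique in $G^2$, (b) $S$ is an independent set in $G$, and (c) $G$ has a 2-degeneracy order in which all vertices of $S$ appear consecutively. *)

theory Defs
  imports Main
begin

definition graph :: "'a set \<Rightarrow> ('a \<Rightarrow> 'a \<Rightarrow> bool) \<Rightarrow> bool" where
  "graph V E \<longleftrightarrow> finite V \<and> (\<forall>x y. E x y \<longrightarrow> x \<in> V \<and> y \<in> V)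
     \<and> (\<forall>x y. E x y \<longrightarrow> E y x) \<and> (\<forall>x. \<not> E x x)"

definition degree :: "'a set \<Rightarrow> ('a \<Rightarrow> 'a \<Rightarrow> bool) \<Rightarrow> 'a \<Rightarrow> nat" where
  "degree V E x = card {y \<in> V. E x y}"

definition max_degree_le :: "'a set \<Rightarrow> ('a \<Rightarrow> 'a \<Rightarrow> bool) \<Rightarrow> nat \<Rightarrow> bool" where
  "max_degree_le V E D \<longleftrightarrow> (\<forall>x\<in>V. degree V E x \<le> D)"

definition square :: "('a \<Rightarrow> 'a \<Rightarrow> bool) \<Rightarrow> 'a \<Rightarrow> 'a \<Rightarrow> bool" where
  "square E x y \<longleftrightarrow> x \<noteq> y \<and> (E x y \<or> (\<exists>z. E x z \<and> E z y))"

definition clique :: "'a set \<Rightarrow> ('a \<Rightarrow> 'a \<Rightarrow> bool) \<Rightarrow> 'a set \<Rightarrow> bool" where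
  "clique V E S \<longleftrightarrow> S \<subseteq> V \<and> (\<forall>x\<in>S. \<forall>y\<in>S. x \<noteq> y \<longrightarrow> E x y)"

definition max_clique :: "'a set \<Rightarrow> ('a \<Rightarrow> 'a \<Rightarrow> bool) \<Rightarrow> 'a set \<Rightarrow> bool" where
  "max_clique V E S \<longleftrightarrow> clique V E S \<and> (\<forall>T. clique V E T \<longrightarrow> card T \<le> card S)"

definition clique_number :: "'a set \<Rightarrow> ('a \<Rightarrow> 'a \<Rightarrow> bool) \<Rightarrow> nat" where
  "clique_number V E = Max {card S | S. clique V E S}"

definition independent :: "'a set \<Rightarrow> ('a \<Rightarrow> 'a \<Rightarrow> bool) \<Rightarrow> 'a set \<Rightarrow> bool" where
  "independent V E S \<longleftrightarrow> S \<subseteq> V \<and> (\<forall>x\<in>S. \<forall>y\<in>S. \<not> E x y)"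

definition degeneracy_order :: "'a set \<Rightarrow> ('a \<Rightarrow> 'a \<Rightarrow> bool) \<Rightarrow> nat \<Rightarrow> 'a list \<Rightarrow> bool" where
  "degeneracy_order V E k xs \<longleftrightarrow> distinct xs \<and> set xs = V \<and>
     (\<forall>i<length xs. card {j. i < j \<and> j < length xs \<and> E (xs ! i) (xs ! j)} \<le> k)"

definition nice :: "'a set \<Rightarrow> ('a \<Rightarrow> 'a \<Rightarrow> bool) \<Rightarrow> 'a set \<Rightarrow> bool" where
  "nice V E S \<longleftrightarrow> clique V (square E) S \<and> independent V E S \<and>
     (\<exists>xs. degeneracy_order V E 2 xs \<and> (\<exists>a b c. xs = a @ b @ c \<and> set b = S))"

end

theory Submission
  imports Defs
begin

lemma card_Sigma_swap:
  assumes "finite R" "finite S"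
  shows "(\<Sum>w\<in>R. card {v\<in>S. w \<in> P v}) = (\<Sum>v\<in>S. card (P v \<inter> R))"
proof -
  have "(\<Sum>w\<in>R. card {v\<in>S. w \<in> P v}) = card (SIGMA w:R. {v\<in>S. w \<in> P v})"
    using assms by (simp add: card_SigmaI)
  also have "(SIGMA w:R. {v\<in>S. w \<in> P v}) = (\<lambda>(v,w). (w,v)) ` (SIGMA v:S. P v \<inter> R)"
    by (auto simp: image_iff)
  also have "card \<dots> = card (SIGMA v:S. P v \<inter> R)"
    by (rule card_image) (auto simp: inj_on_def)
  also have "\<dots> = (\<Sum>v\<in>S. card (P v \<inter> R))"
    using assms by (simp add: card_SigmaI)
  finally show ?thesis .
qed

lemma card_le2: "N \<subseteq> {p,q} \<Longrightarrow> card N \<le> 2"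
proof -
  assume "N \<subseteq> {p,q}"
  hence "card N \<le> card {p,q}" by (intro card_mono) auto
  also have "\<dots> \<le> 2" by (simp add: card_insert_if)
  finally show ?thesis .
qed

lemma four_lemma:
  assumes "N \<subseteq> {x,y,z,t}" "3 \<le> card N"
  shows "((x\<in>N \<and> y\<in>N) \<or> (z\<in>N \<and> t\<in>N)) \<and> (x\<in>N \<or> y\<in>N) \<and> (z\<in>N \<or> t\<in>N)"
proof -
  have a: "x\<in>N \<or> y\<in>N"
  proof (rule ccontr)
    assume "\<not> ?thesis" hence "N \<subseteq> {z,t}" using assms(1) by auto
    thus False using card_le2 assms(2) by fastforce
  qed
  have b: "z\<in>N \<or> t\<in>N"
  proof (rule ccontr)
    assume "\<not> ?thesis" hence "N \<subseteq> {x,y}" using assms(1) by auto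
    thus False using card_le2 assms(2) by fastforce
  qed
  have c: "(x\<in>N \<and> y\<in>N) \<or> (z\<in>N \<and> t\<in>N)"
  proof (rule ccontr)
    assume h: "\<not> ?thesis"
    obtain p where p: "p \<in> {x,y}" "N \<inter> {x,y} \<subseteq> {p}" using h by blast
    obtain q where q: "q \<in> {z,t}" "N \<inter> {z,t} \<subseteq> {q}" using h by blast
    have "N \<subseteq> {p,q}" using assms(1) p q by blast
    thus False using card_le2 assms(2) by fastforce
  qed
  show ?thesis using a b c by blast
qed

locale core =
  fixes S :: "'b set" and P :: "'b \<Rightarrow> 'c set" and D :: nat
  assumes finS: "finite S"
    and P2: "\<And>v. v \<in> S \<Longrightarrow> card (P v) = 2"
    and Tle: "\<And>w. card {v\<in>S. w \<in> P v} \<le> D"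
    and NPle: "\<And>v. v \<in> S \<Longrightarrow> card {u\<in>S. P u \<inter> P v = {}} + 2 \<le> D"
    and big: "5 * D + 1 \<le> 2 * card S"
begin

definition T where "T w = {v\<in>S. w \<in> P v}"
definition NP where "NP v = {u\<in>S. P u \<inter> P v = {}}"
definition VV where "VV = \<Union>(P ` S)"
definition Nb where "Nb w = (\<Union>v\<in>T w. P v) - {w}"
definition Mb where "Mb w = VV - {w} - Nb w"

abbreviation "s \<equiv> card S"
abbreviation "d w \<equiv> int (card (T w))"

lemma finP: "v \<in> S \<Longrightarrow> finite (P v)"
  using P2 by (metis card.infinite zero_neq_numeral)

lemma P2E: assumes "v \<in> S" obtains x y where "P v = {x,y}" "x \<noteq> y"
  using P2[OF assms] by (metis card_2_iff)

lemma finVV: "finite VV"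
  unfolding VV_def using finS finP by auto

lemma finT: "finite (T w)" unfolding T_def using finS by auto

lemma TleD: "card (T w) \<le> D" unfolding T_def using Tle by simp

lemma NPle': "v \<in> S \<Longrightarrow> card (NP v) + 2 \<le> D" unfolding NP_def using NPle by simp

lemma PsubVV: "v \<in> S \<Longrightarrow> P v \<subseteq> VV" unfolding VV_def by auto

lemma sumVV: "(\<Sum>w\<in>VV. card (T w)) = 2 * s"
proof -
  have "(\<Sum>w\<in>VV. card (T w)) = (\<Sum>v\<in>S. card (P v \<inter> VV))"
    unfolding T_def by (rule card_Sigma_swap[OF finVV finS])
  also have "\<dots> = (\<Sum>v\<in>S. 2)"
    by (rule sum.cong) (auto simp: PsubVV P2 Int_absorb2)
  finally show ?thesis by simp
qed

lemma sumR: "finite R \<Longrightarrow> (\<Sum>w\<in>R. card (T w)) = (\<Sum>v\<in>S. card (P v \<inter> R))"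
  unfolding T_def by (rule card_Sigma_swap[OF _ finS])

lemma P1:
  assumes v: "v \<in> S" and Pv: "P v = {x,y}" and xy: "x \<noteq> y"
  shows "int s + int (card (T x \<inter> T y)) \<le> d x + d y + int D - 2"
proof -
  have "S \<subseteq> T x \<union> T y \<union> NP v"
    unfolding T_def NP_def using Pv by auto
  hence "s \<le> card (T x \<union> T y \<union> NP v)"
    using finT finS by (intro card_mono) (auto simp: NP_def)
  also have "\<dots> \<le> card (T x \<union> T y) + card (NP v)"
    by (rule card_Un_le)
  finally have 1: "s \<le> card (T x \<union> T y) + card (NP v)" .
  have 2: "card (T x \<union> T y) + card (T x \<inter> T y) = card (T x) + card (T y)"
    using card_Un_Int[OF finT finT] by simp
  show ?thesis using 1 2 NPle'[OF v] by linarith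
qed

lemma m_pos:
  assumes v: "v \<in> S" and Pv: "P v = {x,y}"
  shows "1 \<le> card (T x \<inter> T y)"
proof -
  have "v \<in> T x \<inter> T y" using v Pv unfolding T_def by auto
  moreover have "finite (T x \<inter> T y)" using finT by auto
  ultimately show ?thesis by (auto simp: Suc_le_eq card_gt_0_iff)
qed

lemma delta0: assumes "w \<in> VV" shows "int s + 3 \<le> d w + 2 * int D"
proof -
  obtain v where v: "v \<in> S" "w \<in> P v" using assms unfolding VV_def by auto
  obtain x y where Pv: "P v = {x,y}" "x \<noteq> y" using P2E[OF v(1)] by blast
  have "int s + 1 \<le> d x + d y + int D - 2"
    using P1[OF v(1) Pv] m_pos[OF v(1) Pv(1)] by linarith
  moreover have "w = x \<or> w = y" using v Pv by auto
  ultimately show ?thesis using TleD[of x] TleD[of y] by auto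
qed

lemma smallVV: "6 \<le> card VV"
proof (rule ccontr)
  assume "\<not> 6 \<le> card VV"
  hence "card VV \<le> 5" by simp
  have "(\<Sum>w\<in>VV. card (T w)) \<le> (\<Sum>w\<in>VV. D)" by (rule sum_mono) (rule TleD)
  hence "2 * s \<le> card VV * D" using sumVV by simp
  also have "\<dots> \<le> 5 * D" using \<open>card VV \<le> 5\<close> by simp
  finally show False using big by simp
qed


lemma bigI: "5 * int D + 1 \<le> 2 * int s"
proof -
  have "int (5 * D + 1) \<le> int (2 * s)" using big by (simp only: of_nat_le_iff)
  thus ?thesis by simp
qed

lemma dleD: "d w \<le> int D" using TleD[of w] by simp

lemma finNb: "finite (Nb w)"
proof -
  have "Nb w \<subseteq> VV" unfolding Nb_def T_def VV_def by auto
  thus ?thesis using finVV finite_subset by blast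
qed

lemma NbVV: "Nb w \<subseteq> VV - {w}" unfolding Nb_def T_def VV_def by auto

lemma pair_of:
  assumes "v \<in> S" "w \<in> P v" "y \<in> P v" "w \<noteq> y"
  shows "P v = {w,y}"
proof -
  have "{w,y} \<subseteq> P v" using assms by auto
  moreover have "card {w,y} = 2" using assms by auto
  ultimately show ?thesis using P2[OF assms(1)] finP[OF assms(1)]
    by (metis card_subset_eq)
qed

lemma Nb_iff: "y \<in> Nb w \<longleftrightarrow> (\<exists>v\<in>S. P v = {w,y} \<and> w \<noteq> y)"
proof
  assume "y \<in> Nb w"
  then obtain v where v: "v \<in> S" "w \<in> P v" "y \<in> P v" "y \<noteq> w" unfolding Nb_def T_def by auto
  thus "\<exists>v\<in>S. P v = {w,y} \<and> w \<noteq> y" using pair_of[OF v(1-3)] by auto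
next
  assume "\<exists>v\<in>S. P v = {w,y} \<and> w \<noteq> y"
  thus "y \<in> Nb w" unfolding Nb_def T_def by auto
qed

lemma Nb_sym: "y \<in> Nb w \<longleftrightarrow> w \<in> Nb y"
  unfolding Nb_iff by (auto simp: insert_commute)

lemma Tw_cover: assumes "w \<in> VV" shows "T w = (\<Union>y\<in>Nb w. T w \<inter> T y)"
proof
  show "T w \<subseteq> (\<Union>y\<in>Nb w. T w \<inter> T y)"
  proof
    fix v assume v: "v \<in> T w"
    hence vS: "v \<in> S" "w \<in> P v" unfolding T_def by auto
    obtain x y where Pv: "P v = {x,y}" "x \<noteq> y" using P2E[OF vS(1)] by blast
    obtain z where z: "z \<in> P v" "z \<noteq> w" using Pv by blast
    have "z \<in> Nb w" unfolding Nb_def using v z by auto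
    moreover have "v \<in> T z" unfolding T_def using vS z by auto
    ultimately show "v \<in> (\<Union>y\<in>Nb w. T w \<inter> T y)" using v by auto
  qed
qed auto

lemma m_bound:
  assumes "y \<in> Nb w"
  shows "int (card (T w \<inter> T y)) \<le> d w + d y + int D - 2 - int s"
proof -
  obtain v where v: "v \<in> S" "P v = {w,y}" "w \<noteq> y" using assms Nb_iff by blast
  show ?thesis using P1[OF v] by linarith
qed

lemma I1:
  assumes "w \<in> VV"
  shows "d w \<le> (\<Sum>y\<in>Nb w. d w + d y + int D - 2 - int s)"
proof -
  have "card (T w) \<le> (\<Sum>y\<in>Nb w. card (T w \<inter> T y))"
    by (subst Tw_cover[OF assms]) (rule card_UN_le[OF finNb])
  hence "d w \<le> (\<Sum>y\<in>Nb w. int (card (T w \<inter> T y)))"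
    by (metis of_nat_le_iff of_nat_sum)
  also have "\<dots> \<le> (\<Sum>y\<in>Nb w. d w + d y + int D - 2 - int s)"
    by (rule sum_mono) (rule m_bound)
  finally show ?thesis .
qed

lemma P3: assumes "w \<in> VV" shows "3 \<le> card (Nb w)"
proof (rule ccontr)
  assume "\<not> 3 \<le> card (Nb w)"
  hence c: "card (Nb w) \<le> 2" by simp
  define X where "X = d w + 2 * int D - 2 - int s"
  have X0: "0 \<le> X" using delta0[OF assms] unfolding X_def by linarith
  have "d w \<le> (\<Sum>y\<in>Nb w. d w + d y + int D - 2 - int s)" by (rule I1[OF assms])
  also have "\<dots> \<le> (\<Sum>y\<in>Nb w. X)"
    by (rule sum_mono) (use TleD in \<open>auto simp: X_def\<close>)
  also have "\<dots> = int (card (Nb w)) * X" by simp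
  also have "\<dots> \<le> 2 * X" using c X0 by (intro mult_right_mono) auto
  finally have "d w \<le> 2 * X" .
  thus False using dleD[of w] bigI unfolding X_def by (simp add: algebra_simps)
qed


lemma NP_mem: "u \<in> NP v \<longleftrightarrow> u \<in> S \<and> P u \<inter> P v = {}" unfolding NP_def by auto

lemma Pne: "v \<in> S \<Longrightarrow> P v \<noteq> {}" using P2 by fastforce

lemma finNP: "finite (NP v)" unfolding NP_def using finS by auto

lemma sum_ind: "A \<subseteq> S \<Longrightarrow> (\<Sum>u\<in>S. (if u \<in> A then 1 else 0::nat)) = card A"
proof -
  assume "A \<subseteq> S"
  have "(\<Sum>u\<in>S. (if u \<in> A then 1 else 0::nat)) = card (S \<inter> {u. u \<in> A})"
    using finS by (simp add: sum.If_cases)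
  also have "S \<inter> {u. u \<in> A} = A" using \<open>A \<subseteq> S\<close> by auto
  finally show ?thesis .
qed

lemma P4:
  assumes v1: "v1 \<in> S" and v2: "v2 \<in> S" and dj: "P v1 \<inter> P v2 = {}"
  shows "(\<Sum>w\<in>VV - (P v1 \<union> P v2). d w) + 2 \<le> int (card (NP v1)) + int (card (NP v2))"
proof -
  define R where "R = VV - (P v1 \<union> P v2)"
  have finR: "finite R" unfolding R_def using finVV by auto
  have ne: "v1 \<noteq> v2" using dj Pne[OF v1] by auto
  have A1: "NP v1 - {v2} \<subseteq> S" and A2: "NP v2 - {v1} \<subseteq> S" unfolding NP_def by auto
  have pt: "card (P u \<inter> R) \<le> (if u \<in> NP v1 - {v2} then 1 else 0) + (if u \<in> NP v2 - {v1} then 1 else 0)"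
    if u: "u \<in> S" for u
  proof -
    obtain p q where Pu: "P u = {p,q}" "p \<noteq> q" using P2E[OF u] by blast
    have pq: "p \<in> VV" "q \<in> VV" using PsubVV[OF u] Pu by auto
    have R1: "P v1 \<inter> R = {}" "P v2 \<inter> R = {}" unfolding R_def by auto
    show ?thesis
    proof (cases "p \<in> R")
      case pR: True
      show ?thesis
      proof (cases "q \<in> R")
        case True
        have "u \<in> NP v1 - {v2}" "u \<in> NP v2 - {v1}"
          using pR True R1 Pu u unfolding NP_def R_def by auto
        moreover have "card (P u \<inter> R) \<le> 2" using Pu by (metis P2 u card_mono finP Int_lower1)
        ultimately show ?thesis by simp
      next
        case False
        hence "q \<in> P v1 \<or> q \<in> P v2" using pq unfolding R_def by auto
        hence "u \<in> NP v1 - {v2} \<or> u \<in> NP v2 - {v1}"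
          using pR R1 Pu u dj unfolding NP_def R_def by auto
        moreover have "P u \<inter> R = {p}" using Pu pR False by auto
        ultimately show ?thesis by auto
      qed
    next
      case pR: False
      show ?thesis
      proof (cases "q \<in> R")
        case True
        hence "p \<in> P v1 \<or> p \<in> P v2" using pq pR unfolding R_def by auto
        hence "u \<in> NP v1 - {v2} \<or> u \<in> NP v2 - {v1}"
          using True R1 Pu u dj unfolding NP_def R_def by auto
        moreover have "P u \<inter> R = {q}" using Pu pR True by auto
        ultimately show ?thesis by auto
      next
        case False
        hence "P u \<inter> R = {}" using Pu pR by auto
        thus ?thesis by simp
      qed
    qed
  qed
  have "(\<Sum>w\<in>R. card (T w)) = (\<Sum>u\<in>S. card (P u \<inter> R))" by (rule sumR[OF finR])
  also have "\<dots> \<le> (\<Sum>u\<in>S. (if u \<in> NP v1 - {v2} then 1 else 0) + (if u \<in> NP v2 - {v1} then 1 else 0))"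
    by (rule sum_mono) (rule pt)
  also have "\<dots> = card (NP v1 - {v2}) + card (NP v2 - {v1})"
    by (simp only: sum.distrib sum_ind[OF A1] sum_ind[OF A2])
  finally have 1: "(\<Sum>w\<in>R. card (T w)) \<le> card (NP v1 - {v2}) + card (NP v2 - {v1})" .
  have "v2 \<in> NP v1" "v1 \<in> NP v2" using v1 v2 dj unfolding NP_def by auto
  hence 2: "card (NP v1 - {v2}) + 1 = card (NP v1)" "card (NP v2 - {v1}) + 1 = card (NP v2)"
    using finNP by (auto simp: card_Diff_singleton_if card_gt_0_iff) (metis Suc_pred card_gt_0_iff empty_iff finNP)+
  have "(\<Sum>w\<in>R. d w) = int (\<Sum>w\<in>R. card (T w))" by simp
  thus ?thesis using 1 2 unfolding R_def by linarith
qed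


lemma Sne: "S \<noteq> {}" using big by auto

lemma nu3:
  assumes "6 \<le> card VV"
  shows "\<exists>v1\<in>S. \<exists>v2\<in>S. \<exists>v3\<in>S. P v1 \<inter> P v2 = {} \<and> P v1 \<inter> P v3 = {} \<and> P v2 \<inter> P v3 = {}"
proof -
  obtain v1 where v1: "v1 \<in> S" using Sne by blast
  obtain x y where Pv1: "P v1 = {x,y}" "x \<noteq> y" using P2E[OF v1] by blast
  have "card VV - card {x,y} \<le> card (VV - {x,y})" by (rule diff_card_le_card_Diff) auto
  hence "4 \<le> card (VV - {x,y})" using assms Pv1 by simp
  then obtain z where z: "z \<in> VV" "z \<notin> {x,y}" by (metis Diff_iff all_not_in_conv card.empty not_numeral_le_zero)
  have "card (Nb z) - card {x,y} \<le> card (Nb z - {x,y})" by (rule diff_card_le_card_Diff) auto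
  hence "1 \<le> card (Nb z - {x,y})" using P3[OF z(1)] Pv1 by simp
  then obtain t where t: "t \<in> Nb z" "t \<notin> {x,y}" by (metis Diff_iff all_not_in_conv card.empty not_one_le_zero)
  obtain v2 where v2: "v2 \<in> S" "P v2 = {z,t}" "z \<noteq> t" using t(1) Nb_iff by blast
  have tV: "t \<in> VV" using t(1) NbVV by auto
  define R0 where "R0 = VV - {x,y,z,t}"
  have "card VV - card {x,y,z,t} \<le> card R0" unfolding R0_def by (rule diff_card_le_card_Diff) auto
  moreover have "card {x,y,z,t} \<le> 4" by (simp add: card_insert_if)
  ultimately have cR0: "2 \<le> card R0" using assms by simp
  then obtain a where a: "a \<in> R0" by (metis all_not_in_conv card.empty not_numeral_le_zero)
  have "card R0 - card {a} \<le> card (R0 - {a})" by (rule diff_card_le_card_Diff) auto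
  hence "1 \<le> card (R0 - {a})" using cR0 by simp
  then obtain b where b: "b \<in> R0" "b \<noteq> a" by (metis Diff_iff all_not_in_conv card.empty not_one_le_zero singletonI)
  have d12: "P v1 \<inter> P v2 = {}" using Pv1 v2 z t by auto
  show ?thesis
  proof (cases "\<exists>u\<in>S. P u \<subseteq> R0")
    case True
    then obtain u where u: "u \<in> S" "P u \<subseteq> R0" by blast
    have "P v1 \<inter> P u = {}" "P v2 \<inter> P u = {}" using u(2) Pv1 v2 unfolding R0_def by auto
    thus ?thesis using v1 v2 u d12 by blast
  next
    case False
    have NbR: "Nb r \<subseteq> {x,y,z,t}" if r: "r \<in> R0" for r
    proof
      fix q assume q: "q \<in> Nb r"
      obtain u where u: "u \<in> S" "P u = {r,q}" "r \<noteq> q" using q Nb_iff by blast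
      have "q \<in> VV" using q NbVV by auto
      show "q \<in> {x,y,z,t}"
      proof (rule ccontr)
        assume "q \<notin> {x,y,z,t}"
        hence "P u \<subseteq> R0" using u r \<open>q \<in> VV\<close> unfolding R0_def by auto
        thus False using False u by blast
      qed
    qed
    have aV: "a \<in> VV" "b \<in> VV" using a b unfolding R0_def by auto
    have fa: "((x\<in>Nb a \<and> y\<in>Nb a) \<or> (z\<in>Nb a \<and> t\<in>Nb a)) \<and> (x\<in>Nb a \<or> y\<in>Nb a) \<and> (z\<in>Nb a \<or> t\<in>Nb a)"
      by (rule four_lemma[OF NbR[OF a] P3[OF aV(1)]])
    have fb: "((x\<in>Nb b \<and> y\<in>Nb b) \<or> (z\<in>Nb b \<and> t\<in>Nb b)) \<and> (x\<in>Nb b \<or> y\<in>Nb b) \<and> (z\<in>Nb b \<or> t\<in>Nb b)"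
      by (rule four_lemma[OF NbR[OF b(1)] P3[OF aV(2)]])
    have abnot: "a \<notin> {x,y,z,t}" "b \<notin> {x,y,z,t}" using a b unfolding R0_def by auto
    have mk3: "?thesis" if h: "p \<in> Nb a" "q \<in> Nb b" "w \<in> S" "{a,p} \<inter> {b,q} = {}"
       "{a,p} \<inter> P w = {}" "{b,q} \<inter> P w = {}" for p q w
    proof -
      obtain u1 where u1: "u1 \<in> S" "P u1 = {a,p}" using Nb_iff[THEN iffD1, OF h(1)] by blast
      obtain u2 where u2: "u2 \<in> S" "P u2 = {b,q}" using Nb_iff[THEN iffD1, OF h(2)] by blast
      have "P u1 \<inter> P u2 = {} \<and> P u1 \<inter> P w = {} \<and> P u2 \<inter> P w = {}"
        using u1(2) u2(2) h(4-6) by simp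
      thus ?thesis by (intro bexI[OF _ u1(1)] bexI[OF _ u2(1)] bexI[OF _ h(3)])
    qed
    have xyn: "x \<noteq> z" "x \<noteq> t" "y \<noteq> z" "y \<noteq> t" using z t by auto
    have "(x\<in>Nb a \<and> y\<in>Nb a) \<or> (z\<in>Nb a \<and> t\<in>Nb a)" using fa by blast
    thus ?thesis
    proof
      assume xa: "x\<in>Nb a \<and> y\<in>Nb a"
      have "x \<in> Nb b \<or> y \<in> Nb b" using fb by blast
      thus ?thesis
      proof
        assume "x \<in> Nb b"
        thus ?thesis by (intro mk3[of y x v2]) (use xa v2 abnot b(2) Pv1 xyn in auto)
      next
        assume "y \<in> Nb b"
        thus ?thesis by (intro mk3[of x y v2]) (use xa v2 abnot b(2) Pv1 xyn in auto)
      qed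
    next
      assume za: "z\<in>Nb a \<and> t\<in>Nb a"
      have "z \<in> Nb b \<or> t \<in> Nb b" using fb by blast
      thus ?thesis
      proof
        assume "z \<in> Nb b"
        thus ?thesis by (intro mk3[of t z v1]) (use za v1 abnot b(2) Pv1 v2 xyn in auto)
      next
        assume "t \<in> Nb b"
        thus ?thesis by (intro mk3[of z t v1]) (use za v1 abnot b(2) Pv1 v2 xyn in auto)
      qed
    qed
  qed
qed

lemma sumVVi: "(\<Sum>w\<in>VV. d w) = 2 * int s"
proof -
  have "(\<Sum>w\<in>VV. d w) = int (\<Sum>w\<in>VV. card (T w))" by simp
  thus ?thesis using sumVV by simp
qed

lemma three:
  assumes v: "v1 \<in> S" "v2 \<in> S" "v3 \<in> S"
    and dj: "P v1 \<inter> P v2 = {}" "P v1 \<inter> P v3 = {}" "P v2 \<inter> P v3 = {}"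
  shows "2 * int s + 2 * (\<Sum>w\<in>VV - (P v1 \<union> P v2 \<union> P v3). d w) + 18 \<le> 6 * int D"
proof -
  let ?A = "P v1" and ?B = "P v2" and ?C = "P v3"
  have fin: "finite ?A" "finite ?B" "finite ?C" using finP v by auto
  have sub: "?A \<subseteq> VV" "?B \<subseteq> VV" "?C \<subseteq> VV" using PsubVV v by auto
  have dj2: "?B \<inter> ?A = {}" "?C \<inter> ?A = {}" "?C \<inter> ?B = {}" using dj by auto
  have u2: "sum d (X \<union> Y) = sum d X + sum d Y" if "finite X" "finite Y" "X \<inter> Y = {}" for X Y
    using sum.union_disjoint[OF that] .
  have sAB: "sum d (?A \<union> ?B) = sum d ?A + sum d ?B" by (rule u2) (use fin dj in auto)
  have sAC: "sum d (?A \<union> ?C) = sum d ?A + sum d ?C" by (rule u2) (use fin dj in auto)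
  have sBC: "sum d (?B \<union> ?C) = sum d ?B + sum d ?C" by (rule u2) (use fin dj in auto)
  have sABC: "sum d (?A \<union> ?B \<union> ?C) = sum d ?A + sum d ?B + sum d ?C"
    by (subst u2) (use fin dj sAB in auto)
  have e1: "sum d (VV - (?A \<union> ?B)) = sum d VV - sum d (?A \<union> ?B)"
    by (rule sum_diff) (use finVV sub in auto)
  have e2: "sum d (VV - (?A \<union> ?C)) = sum d VV - sum d (?A \<union> ?C)"
    by (rule sum_diff) (use finVV sub in auto)
  have e3: "sum d (VV - (?B \<union> ?C)) = sum d VV - sum d (?B \<union> ?C)"
    by (rule sum_diff) (use finVV sub in auto)
  have e4: "sum d (VV - (?A \<union> ?B \<union> ?C)) = sum d VV - sum d (?A \<union> ?B \<union> ?C)"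
    by (rule sum_diff) (use finVV sub in auto)
  have p12: "sum d (VV - (?A \<union> ?B)) + 2 \<le> int (card (NP v1)) + int (card (NP v2))"
    by (rule P4) (use v dj in auto)
  have p13: "sum d (VV - (?A \<union> ?C)) + 2 \<le> int (card (NP v1)) + int (card (NP v3))"
    by (rule P4) (use v dj in auto)
  have p23: "sum d (VV - (?B \<union> ?C)) + 2 \<le> int (card (NP v2)) + int (card (NP v3))"
    by (rule P4) (use v dj in auto)
  have n1: "int (card (NP v1)) + 2 \<le> int D" using NPle'[OF v(1)] by linarith
  have n2: "int (card (NP v2)) + 2 \<le> int D" using NPle'[OF v(2)] by linarith
  have n3: "int (card (NP v3)) + 2 \<le> int D" using NPle'[OF v(3)] by linarith
  show ?thesis using sumVVi sAB sAC sBC sABC e1 e2 e3 e4 p12 p13 p23 n1 n2 n3 by linarith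
qed

lemma not_ge7: "\<not> 7 \<le> card VV"
proof
  assume h: "7 \<le> card VV"
  obtain v1 v2 v3 where v: "v1 \<in> S" "v2 \<in> S" "v3 \<in> S"
    and dj: "P v1 \<inter> P v2 = {}" "P v1 \<inter> P v3 = {}" "P v2 \<inter> P v3 = {}"
    using nu3 h by auto
  let ?C0 = "VV - (P v1 \<union> P v2 \<union> P v3)"
  have "card (P v1 \<union> P v2 \<union> P v3) \<le> 6"
  proof -
    have "card (P v1 \<union> P v2 \<union> P v3) \<le> card (P v1) + card (P v2) + card (P v3)"
      by (metis add_le_mono card_Un_le le_refl order_trans)
    thus ?thesis using P2 v by simp
  qed
  hence "card VV - card (P v1 \<union> P v2 \<union> P v3) \<le> card ?C0"
    by (intro diff_card_le_card_Diff) (use finP v in auto)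
  hence "0 < card ?C0" using h \<open>card (P v1 \<union> P v2 \<union> P v3) \<le> 6\<close> by linarith
  hence "?C0 \<noteq> {}" by (metis card.empty less_irrefl)
  then obtain c where c: "c \<in> ?C0" by blast
  have "d c \<le> (\<Sum>w\<in>?C0. d w)"
    by (rule member_le_sum) (use c finVV in auto)
  moreover have "int s + 3 \<le> d c + 2 * int D" using delta0 c by auto
  ultimately show False using three[OF v dj] bigI by linarith
qed

lemma Mb_iff: "y \<in> Mb w \<longleftrightarrow> y \<in> VV \<and> y \<noteq> w \<and> y \<notin> Nb w" unfolding Mb_def by auto

lemma finMb: "finite (Mb w)" unfolding Mb_def using finVV by auto

lemma F6:
  assumes w: "w \<in> VV" and c6: "card VV = 6"
  shows "card (Nb w) + card (Mb w) = 5"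
    and "(\<Sum>y\<in>Mb w. d y) \<le> int (card (Nb w)) * (d w + int D - 2 - int s) + 2 * int s - 2 * d w"
proof -
  have sub: "Nb w \<subseteq> VV - {w}" by (rule NbVV)
  have c5: "card (VV - {w}) = 5" using c6 w finVV by simp
  have "Mb w = (VV - {w}) - Nb w" unfolding Mb_def by auto
  hence "card (Mb w) = card (VV - {w}) - card (Nb w)"
    using sub finVV by (simp add: card_Diff_subset finNb)
  moreover have "card (Nb w) \<le> card (VV - {w})" using sub finVV by (intro card_mono) auto
  ultimately show "card (Nb w) + card (Mb w) = 5" using c5 by simp
  have VVs: "VV = insert w (Nb w \<union> Mb w)" using w sub unfolding Mb_def by auto
  have "(\<Sum>y\<in>VV. d y) = d w + (\<Sum>y\<in>Nb w \<union> Mb w. d y)"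
    by (subst VVs, rule sum.insert) (use finNb finMb sub in \<open>auto simp: Mb_def\<close>)
  also have "(\<Sum>y\<in>Nb w \<union> Mb w. d y) = (\<Sum>y\<in>Nb w. d y) + (\<Sum>y\<in>Mb w. d y)"
    by (rule sum.union_disjoint) (use finNb finMb in \<open>auto simp: Mb_def\<close>)
  finally have 1: "2 * int s = d w + (\<Sum>y\<in>Nb w. d y) + (\<Sum>y\<in>Mb w. d y)" using sumVVi by simp
  have "d w \<le> (\<Sum>y\<in>Nb w. d w + d y + int D - 2 - int s)" by (rule I1[OF w])
  also have "\<dots> = (\<Sum>y\<in>Nb w. (d w + int D - 2 - int s) + d y)"
    by (rule sum.cong) auto
  also have "\<dots> = int (card (Nb w)) * (d w + int D - 2 - int s) + (\<Sum>y\<in>Nb w. d y)"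
    by (simp add: sum.distrib)
  finally have 2: "d w \<le> int (card (Nb w)) * (d w + int D - 2 - int s) + (\<Sum>y\<in>Nb w. d y)" .
  show "(\<Sum>y\<in>Mb w. d y) \<le> int (card (Nb w)) * (d w + int D - 2 - int s) + 2 * int s - 2 * d w"
    using 1 2 by linarith
qed

lemma D7: "7 \<le> D"
proof -
  obtain v where "v \<in> S" using Sne by blast
  then obtain x y where "P v = {x,y}" by (metis P2E)
  hence "x \<in> VV" using \<open>v \<in> S\<close> unfolding VV_def by auto
  from delta0[OF this] dleD[of x] bigI show ?thesis by linarith
qed

lemma not6: "card VV \<noteq> 6"
proof
  assume c6: "card VV = 6"
  define \<delta> where "\<delta> y = int D - d y" for y
  define k where "k w = card (Mb w)" for w
  define b2 where "b2 = int s - 2 * int D + 6"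
  define g where "g w = (if k w = 0 then 0 else if k w = 1 then 2 * \<delta> w + 9 else \<delta> w + b2)" for w
  have dpos: "0 \<le> \<delta> y" for y unfolding \<delta>_def using dleD by simp
  have sumMbd: "(\<Sum>y\<in>Mb w. \<delta> y) = int (k w) * int D - (\<Sum>y\<in>Mb w. d y)" for w
    unfolding \<delta>_def k_def by (simp add: sum_subtractf)
  have kle: "k w \<le> 2" if w: "w \<in> VV" for w
    using F6(1)[OF w c6] P3[OF w] unfolding k_def by linarith
  have G: "g w \<le> (\<Sum>y\<in>Mb w. \<delta> y)" if w: "w \<in> VV" for w
  proof -
    have f1: "card (Nb w) + k w = 5" using F6(1)[OF w c6] unfolding k_def .
    have f2: "(\<Sum>y\<in>Mb w. d y) \<le> int (card (Nb w)) * (d w + int D - 2 - int s) + 2 * int s - 2 * d w"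
      by (rule F6(2)[OF w c6])
    have "k w = 0 \<or> k w = 1 \<or> k w = 2" using kle[OF w] by auto
    thus ?thesis
    proof (elim disjE)
      assume "k w = 0" thus ?thesis unfolding g_def k_def by (simp add: finMb)
    next
      assume k1: "k w = 1"
      hence "card (Nb w) = 4" using f1 by simp
      hence "(\<Sum>y\<in>Mb w. d y) \<le> 4 * (d w + int D - 2 - int s) + 2 * int s - 2 * d w" using f2 by simp
      thus ?thesis using k1 sumMbd[of w] bigI unfolding g_def \<delta>_def by (simp add: algebra_simps)
    next
      assume k2: "k w = 2"
      hence "card (Nb w) = 3" using f1 by simp
      hence "(\<Sum>y\<in>Mb w. d y) \<le> 3 * (d w + int D - 2 - int s) + 2 * int s - 2 * d w" using f2 by simp
      thus ?thesis using k2 sumMbd[of w] unfolding g_def \<delta>_def b2_def by (simp add: algebra_simps)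
    qed
  qed
  have sumdelta: "(\<Sum>y\<in>VV. \<delta> y) = 6 * int D - 2 * int s"
    unfolding \<delta>_def using c6 sumVVi by (simp add: sum_subtractf)
  have swap: "(\<Sum>w\<in>VV. \<Sum>y\<in>Mb w. \<delta> y) = (\<Sum>y\<in>VV. int (k y) * \<delta> y)"
  proof -
    have setEq: "{w. w \<in> VV \<and> (y \<noteq> w \<and> y \<notin> Nb w)} = Mb y" if "y \<in> VV" for y
      using that by (auto simp: Mb_iff Nb_sym)
    have "(\<Sum>w\<in>VV. \<Sum>y\<in>Mb w. \<delta> y) = (\<Sum>w\<in>VV. \<Sum>y\<in>{y. y \<in> VV \<and> (y \<noteq> w \<and> y \<notin> Nb w)}. \<delta> y)"
      by (rule sum.cong) (auto simp: Mb_iff intro!: sum.cong)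
    also have "\<dots> = (\<Sum>y\<in>VV. \<Sum>w\<in>{w. w \<in> VV \<and> (y \<noteq> w \<and> y \<notin> Nb w)}. \<delta> y)"
      by (rule sum.swap_restrict[OF finVV finVV])
    also have "\<dots> = (\<Sum>y\<in>VV. \<Sum>w\<in>Mb y. \<delta> y)"
      by (rule sum.cong) (simp_all add: setEq)
    also have "\<dots> = (\<Sum>y\<in>VV. int (k y) * \<delta> y)"
      unfolding k_def by simp
    finally show ?thesis .
  qed
  have "(\<Sum>w\<in>VV. g w) \<le> (\<Sum>w\<in>VV. \<Sum>y\<in>Mb w. \<delta> y)"
    by (rule sum_mono) (rule G)
  hence ge: "0 \<le> (\<Sum>y\<in>VV. int (k y) * \<delta> y - g y)"
    using swap by (simp add: sum_subtractf)
  have hle: "int (k y) * \<delta> y - g y \<le> 0" and hlt: "k y \<noteq> 0 \<Longrightarrow> int (k y) * \<delta> y - g y < 0"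
    if y: "y \<in> VV" for y
  proof -
    have ky: "k y = 0 \<or> k y = 1 \<or> k y = 2" using kle[OF y] by auto
    have k2: "\<delta> y < b2" if "k y = 2"
    proof -
      have "\<delta> y + b2 \<le> (\<Sum>z\<in>Mb y. \<delta> z)" using G[OF y] that unfolding g_def by simp
      moreover have "\<delta> y + (\<Sum>z\<in>Mb y. \<delta> z) \<le> (\<Sum>z\<in>VV. \<delta> z)"
      proof -
        have "\<delta> y + (\<Sum>z\<in>Mb y. \<delta> z) = (\<Sum>z\<in>insert y (Mb y). \<delta> z)"
          by (simp add: finMb Mb_iff)
        also have "\<dots> \<le> (\<Sum>z\<in>VV. \<delta> z)"
          by (rule sum_mono2[OF finVV]) (use y dpos in \<open>auto simp: Mb_iff\<close>)
        finally show ?thesis .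
      qed
      ultimately show ?thesis using sumdelta bigI unfolding b2_def by linarith
    qed
    show "int (k y) * \<delta> y - g y \<le> 0"
      using ky k2 dpos[of y] unfolding g_def by auto
    show "k y \<noteq> 0 \<Longrightarrow> int (k y) * \<delta> y - g y < 0"
      using ky k2 dpos[of y] unfolding g_def by auto
  qed
  have allk0: "k y = 0" if y: "y \<in> VV" for y
  proof (rule ccontr)
    assume "k y \<noteq> 0"
    hence "(\<Sum>y\<in>VV. int (k y) * \<delta> y - g y) < (\<Sum>y\<in>VV. 0)"
      by (intro sum_strict_mono_ex1[OF finVV]) (use hle hlt y in auto)
    thus False using ge by simp
  qed
  have last: "0 \<le> 3 * d w + 5 * int D - 10 - 3 * int s" if w: "w \<in> VV" for w
  proof -
    have "Mb w = {}" using allk0[OF w] finMb unfolding k_def by auto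
    moreover have "card (Nb w) = 5" using F6(1)[OF w c6] allk0[OF w] unfolding k_def by simp
    ultimately show ?thesis using F6(2)[OF w c6] by (simp add: algebra_simps)
  qed
  have "0 \<le> (\<Sum>w\<in>VV. 3 * d w + 5 * int D - 10 - 3 * int s)"
    by (rule sum_nonneg) (rule last)
  also have "\<dots> = 3 * (\<Sum>w\<in>VV. d w) + 6 * (5 * int D - 10 - 3 * int s)"
    using c6 by (simp add: sum.distrib sum_subtractf sum_distrib_left algebra_simps)
  also have "\<dots> = 30 * int D - 60 - 12 * int s" using sumVVi by (simp add: algebra_simps)
  finally show False using bigI by linarith
qed

theorem main_false: False
  using smallVV not_ge7 not6 by linarith

end
lemma core_general:
  fixes S :: "'b set" and P :: "'b \<Rightarrow> 'c set" and D :: nat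
  assumes finS: "finite S"
    and Pfin: "\<And>v. v \<in> S \<Longrightarrow> finite (P v) \<and> card (P v) \<le> 2"
    and Tle: "\<And>w. card {v\<in>S. w \<in> P v} \<le> D"
    and NPle: "\<And>v. v \<in> S \<Longrightarrow> card {u\<in>S. u \<noteq> v \<and> P u \<inter> P v = {}} + card (P v) \<le> D"
    and D0: "0 < D"
  shows "2 * card S \<le> 5 * D"
proof (cases "\<exists>v\<in>S. card (P v) \<le> 1")
  case True
  then obtain v where v: "v \<in> S" "card (P v) \<le> 1" by blast
  let ?N = "{u\<in>S. u \<noteq> v \<and> P u \<inter> P v = {}}"
  have finN: "finite ?N" using finS by auto
  show ?thesis
  proof (cases "P v = {}")
    case True
    have "S \<subseteq> insert v ?N" using True by auto
    hence "card S \<le> card (insert v ?N)" using finN by (intro card_mono) auto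
    also have "\<dots> \<le> Suc (card ?N)" by (rule card_insert_le_m1) auto
    finally show ?thesis using NPle[OF v(1)] True D0 by simp
  next
    case False
    then obtain w where w: "w \<in> P v" by blast
    have Pv: "P v = {w}" using v w Pfin[OF v(1)]
      by (metis card_1_singletonE card_0_eq empty_iff le_Suc_eq le_zero_eq One_nat_def singletonD)
    have "S \<subseteq> ?N \<union> {u\<in>S. w \<in> P u}" using Pv by auto
    hence "card S \<le> card (?N \<union> {u\<in>S. w \<in> P u})" using finN finS by (intro card_mono) auto
    also have "\<dots> \<le> card ?N + card {u\<in>S. w \<in> P u}" by (rule card_Un_le)
    finally show ?thesis using NPle[OF v(1)] Tle[of w] Pv by simp
  qed
next
  case False
  hence P2: "\<And>v. v \<in> S \<Longrightarrow> card (P v) = 2" using Pfin by (metis le_antisym not_less_eq_eq numeral_2_eq_2 One_nat_def)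
  show ?thesis
  proof (rule ccontr)
    assume "\<not> 2 * card S \<le> 5 * D"
    hence big: "5 * D + 1 \<le> 2 * card S" by simp
    have NP2: "card {u\<in>S. P u \<inter> P v = {}} + 2 \<le> D" if v: "v \<in> S" for v
    proof -
      have "P v \<noteq> {}" using P2[OF v] by auto
      hence "{u\<in>S. P u \<inter> P v = {}} = {u\<in>S. u \<noteq> v \<and> P u \<inter> P v = {}}" by auto
      thus ?thesis using NPle[OF v] P2[OF v] by simp
    qed
    interpret core S P D
      by unfold_locales (use finS P2 Tle NP2 big in auto)
    show False by (rule main_false)
  qed
qed

lemma later_le2:
  assumes deg: "degeneracy_order V E 2 xs" and i: "i < length xs"
    and Y: "\<And>y. y \<in> Y \<Longrightarrow> \<exists>j. i < j \<and> j < length xs \<and> xs ! j = y \<and> E (xs ! i) y"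
  shows "card Y \<le> 2"
proof -
  let ?J = "{j. i < j \<and> j < length xs \<and> E (xs ! i) (xs ! j)}"
  have finJ: "finite ?J" by (rule finite_subset[of _ "{..<length xs}"]) auto
  have "Y \<subseteq> (!) xs ` ?J"
  proof
    fix y assume "y \<in> Y"
    then obtain j where "i < j" "j < length xs" "xs ! j = y" "E (xs ! i) y" using Y by blast
    thus "y \<in> (!) xs ` ?J" by (intro image_eqI[of _ _ j]) auto
  qed
  hence "card Y \<le> card ((!) xs ` ?J)" using finJ by (intro card_mono) auto
  also have "\<dots> \<le> card ?J" by (rule card_image_le[OF finJ])
  also have "\<dots> \<le> 2" using deg i unfolding degeneracy_order_def by auto
  finally show ?thesis .
qed

theorem theorem3:
  fixes V :: "'a set" and E :: "'a \<Rightarrow> 'a \<Rightarrow> bool" and D :: nat and S :: "'a set"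
  assumes "D > 0"
    and "graph V E"
    and "max_degree_le V E D"
    and "max_clique V (square E) S"
    and "nice V E S"
  shows "2 * clique_number V (square E) \<le> 5 * D"
proof -
  from assms(5) obtain xs a b c where cl: "clique V (square E) S" and ind: "independent V E S"
    and deg: "degeneracy_order V E 2 xs" and xs: "xs = a @ b @ c" and Sb: "set b = S"
    unfolding nice_def by blast
  have finV: "finite V" and EV: "\<And>x y. E x y \<Longrightarrow> x \<in> V \<and> y \<in> V"
    and Esym: "\<And>x y. E x y \<Longrightarrow> E y x" using assms(2) unfolding graph_def by auto
  have dist: "distinct xs" and setxs: "set xs = V" using deg unfolding degeneracy_order_def by auto
  have SV: "S \<subseteq> V" using cl unfolding clique_def by auto
  have finS: "finite S" using finV SV finite_subset by blast
  have indS: "\<And>x y. x \<in> S \<Longrightarrow> y \<in> S \<Longrightarrow> \<not> E x y" using ind unfolding independent_def by auto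
  have clS: "\<And>x y. x \<in> S \<Longrightarrow> y \<in> S \<Longrightarrow> x \<noteq> y \<Longrightarrow> square E x y"
    using cl unfolding clique_def by auto
  have degD: "\<And>x. x \<in> V \<Longrightarrow> card {y\<in>V. E x y} \<le> D"
    using assms(3) unfolding max_degree_le_def degree_def by auto
  have cn: "clique_number V (square E) = card S"
  proof -
    let ?A = "{card T | T. clique V (square E) T}"
    have le: "\<forall>y\<in>?A. y \<le> card S" using assms(4) unfolding max_clique_def by auto
    have "finite ?A" by (rule finite_subset[of _ "{..card S}"]) (use le in auto)
    moreover have "card S \<in> ?A" using cl by auto
    ultimately show ?thesis unfolding clique_number_def using le by (intro Max_eqI) auto
  qed
  have dac: "set a \<inter> set c = {}" "set a \<inter> set b = {}" "set b \<inter> set c = {}"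
    using dist xs by auto
  have lenxs: "length xs = length a + length b + length c" using xs by simp
  have posa: "\<And>z. z \<in> set a \<Longrightarrow> \<exists>j. j < length a \<and> xs ! j = z"
    using xs by (auto simp: in_set_conv_nth nth_append)
  have posb: "\<And>z. z \<in> set b \<Longrightarrow> \<exists>j. j < length b \<and> xs ! (length a + j) = z"
    using xs by (auto simp: in_set_conv_nth nth_append)
  have posc: "\<And>z. z \<in> set c \<Longrightarrow> \<exists>j. j < length c \<and> xs ! (length a + length b + j) = z"
    using xs by (auto simp: in_set_conv_nth nth_append)
  define P where "P v = {w \<in> set c. E v w}" for v
  define Q where "Q v = {w \<in> set a. E v w}" for v
  have Pfin: "finite (P v) \<and> card (P v) \<le> 2" if v: "v \<in> S" for v
  proof
    show "finite (P v)" unfolding P_def by auto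
    obtain j where j: "j < length b" "xs ! (length a + j) = v" using posb v Sb by blast
    show "card (P v) \<le> 2"
    proof (rule later_le2[OF deg, of "length a + j"])
      show "length a + j < length xs" using j lenxs by simp
      fix y assume "y \<in> P v"
      hence y: "y \<in> set c" "E v y" unfolding P_def by auto
      obtain j' where "j' < length c" "xs ! (length a + length b + j') = y" using posc y(1) by blast
      thus "\<exists>j''. length a + j < j'' \<and> j'' < length xs \<and> xs ! j'' = y \<and> E (xs ! (length a + j)) y"
        using j y lenxs by (intro exI[of _ "length a + length b + j'"]) auto
    qed
  qed
  have ale: "card {y\<in>S. E z y} \<le> 2" if z: "z \<in> set a" for z
  proof -
    obtain j where j: "j < length a" "xs ! j = z" using posa z by blast
    show ?thesis
    proof (rule later_le2[OF deg, of j])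
      show "j < length xs" using j lenxs by simp
      fix y assume "y \<in> {y\<in>S. E z y}"
      hence y: "y \<in> set b" "E z y" using Sb by auto
      obtain j' where "j' < length b" "xs ! (length a + j') = y" using posb y(1) by blast
      thus "\<exists>j''. j < j'' \<and> j'' < length xs \<and> xs ! j'' = y \<and> E (xs ! j) y"
        using j y lenxs by (intro exI[of _ "length a + j'"]) auto
    qed
  qed
  have Tle: "card {v\<in>S. w \<in> P v} \<le> D" for w
  proof (cases "w \<in> set c")
    case True
    hence wV: "w \<in> V" using setxs xs by auto
    have "{v\<in>S. w \<in> P v} \<subseteq> {y\<in>V. E w y}" using SV Esym unfolding P_def by auto
    hence "card {v\<in>S. w \<in> P v} \<le> card {y\<in>V. E w y}" using finV by (intro card_mono) auto
    also have "\<dots> \<le> D" by (rule degD[OF wV])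
    finally show ?thesis .
  next
    case False
    hence "{v\<in>S. w \<in> P v} = {}" unfolding P_def by auto
    thus ?thesis by (metis card.empty zero_le)
  qed
  have NPle: "card {u\<in>S. u \<noteq> v \<and> P u \<inter> P v = {}} + card (P v) \<le> D" if v: "v \<in> S" for v
  proof -
    let ?N = "{u\<in>S. u \<noteq> v \<and> P u \<inter> P v = {}}"
    have ex: "\<exists>z. z \<in> Q v \<and> E z u" if u: "u \<in> ?N" for u
    proof -
      have uS: "u \<in> S" "u \<noteq> v" "P u \<inter> P v = {}" using u by auto
      have "square E v u" using clS[OF v uS(1)] uS(2) by auto
      moreover have "\<not> E v u" using indS[OF v uS(1)] .
      ultimately obtain z where z: "E v z" "E z u" unfolding square_def by auto
      have "z \<in> V" using EV z(1) by auto
      hence "z \<in> set a \<or> z \<in> set b \<or> z \<in> set c" using setxs xs by auto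
      moreover have "z \<notin> set b" using indS[OF v] z(1) Sb by auto
      moreover have "z \<notin> set c"
      proof
        assume "z \<in> set c"
        hence "z \<in> P v" "z \<in> P u" using z Esym unfolding P_def by auto
        thus False using uS(3) by auto
      qed
      ultimately have "z \<in> set a" by blast
      thus ?thesis using z unfolding Q_def by auto
    qed
    define f where "f u = (SOME z. z \<in> Q v \<and> E z u)" for u
    have f: "f u \<in> Q v \<and> E (f u) u" if "u \<in> ?N" for u
      unfolding f_def using someI_ex[OF ex[OF that]] .
    have inj: "inj_on f ?N"
    proof (rule inj_onI)
      fix u1 u2 assume u1: "u1 \<in> ?N" and u2: "u2 \<in> ?N" and eq: "f u1 = f u2"
      show "u1 = u2"
      proof (rule ccontr)
        assume ne: "u1 \<noteq> u2"
        let ?z = "f u1"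
        have za: "?z \<in> set a" "E ?z v" using f[OF u1] Esym unfolding Q_def by auto
        have "E ?z u1" "E ?z u2" using f[OF u1] f[OF u2] eq by auto
        hence "{v, u1, u2} \<subseteq> {y\<in>S. E ?z y}" using za v u1 u2 by auto
        hence "card {v, u1, u2} \<le> card {y\<in>S. E ?z y}" using finS by (intro card_mono) auto
        also have "\<dots> \<le> 2" by (rule ale[OF za(1)])
        finally show False using ne u1 u2 by auto
      qed
    qed
    have "card ?N \<le> card (Q v)"
      by (rule card_inj_on_le[OF inj]) (use f in \<open>auto simp: Q_def\<close>)
    moreover have "card (Q v) + card (P v) \<le> D"
    proof -
      have "card (Q v) + card (P v) = card (Q v \<union> P v)"
        by (rule card_Un_disjoint[symmetric]) (use dac in \<open>auto simp: P_def Q_def\<close>)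
      also have "\<dots> \<le> card {y\<in>V. E v y}"
        using finV EV by (intro card_mono) (auto simp: P_def Q_def)
      also have "\<dots> \<le> D" using degD v SV by auto
      finally show ?thesis .
    qed
    ultimately show ?thesis by simp
  qed
  have "2 * card S \<le> 5 * D"
    by (rule core_general[OF finS Pfin Tle NPle assms(1)])
  thus ?thesis using cn by simp
qed

end
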